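(* For any fixed $0\le\lambda_1\le\lambda_2\le1$, the quantity $\Gamma_n\big((\theta^*_n)_{\lambda_1,\lambda_2}\big)$ is non-increasing in $n\ge2$.
   Context: A threshold function is a non-increasing map $\theta:[0,1]\to[0,1]$. For $0\le\lambda_1\le\lambda_2\le1$, $\theta_{\lambda_1,\lambda_2}(t)=1$ for $t\in[0,\lambda_1]$, $=\theta(t)$ for $t\in(\lambda_1,\lambda_2)$, $=0$ for $t\in[\lambda_2,1]$. $\Gamma_n(\theta)=\int_0^1\Big(\int_s^1\frac{(1-t+t\theta(s))^n-t\theta(s)^n}{t(1-t)}\,\mathrm dt-\theta(s)^n\Big)\mathrm ds$. For $s\in[0,1)$, $\theta^*_n(s)$ is the unique solution in $(0,1)$ of $\int_s^1\frac{(1-t+t\theta^*_n(s))^{n-1}-\theta^*_n(s)^{n-1}}{1-t}\,\mathrm dt=\theta^*_n(s)^{n-1}$, and $\theta^*_n(1)=0$. *)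

theory Defs
  imports "HOL-Analysis.Analysis"
begin

definition trunc_thr :: "(real \<Rightarrow> real) \<Rightarrow> real \<Rightarrow> real \<Rightarrow> real \<Rightarrow> real" where
  "trunc_thr \<theta> l1 l2 t = (if t \<le> l1 then 1 else if t < l2 then \<theta> t else 0)"

definition Gamma :: "nat \<Rightarrow> (real \<Rightarrow> real) \<Rightarrow> real" where
  "Gamma n \<theta> = integral {0..1} (\<lambda>s.
      integral {s..1} (\<lambda>t. ((1 - t + t * \<theta> s) ^ n - t * (\<theta> s) ^ n) / (t * (1 - t)))
      - (\<theta> s) ^ n)"

definition theta_star :: "nat \<Rightarrow> real \<Rightarrow> real" where
  "theta_star n s = (if s < 1 then
      (THE x. x \<in> {0<..<1} \<and>
         integral {s..1} (\<lambda>t. ((1 - t + t * x) ^ (n - 1) - x ^ (n - 1)) / (1 - t)) = x ^ (n - 1))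
    else 0)"

end

theory Submission
  imports Defs
begin

definition Sg :: "nat \<Rightarrow> real \<Rightarrow> real \<Rightarrow> real" where
  "Sg n x t = (\<Sum>i<n. x ^ (n - Suc i) * (1 - t + t * x) ^ i)"

definition fo :: "nat \<Rightarrow> real \<Rightarrow> real \<Rightarrow> real" where
  "fo n x t = ((1 - t + t * x) ^ n - t * x ^ n) / (t * (1 - t))"

definition qo :: "nat \<Rightarrow> real \<Rightarrow> real \<Rightarrow> real" where
  "qo j x t = ((1 - t + t * x) ^ j - x ^ j) / (1 - t)"

definition gg :: "nat \<Rightarrow> real \<Rightarrow> real \<Rightarrow> real" where
  "gg n s x = integral {s..1} (fo n x) - x ^ n"

definition FF :: "nat \<Rightarrow> real \<Rightarrow> real \<Rightarrow> real" where
  "FF j s x = integral {s..1} (qo j x) - x ^ j"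

lemma Sg_id: "(1 - t) * (1 - x) * Sg n x t = (1 - t + t * x) ^ n - x ^ n"
proof -
  have "(1 - t + t * x) ^ n - x ^ n = ((1 - t + t * x) - x) * Sg n x t"
    unfolding Sg_def by (rule power_diff_sumr2)
  also have "(1 - t + t * x) - x = (1 - t) * (1 - x)" by (simp add: algebra_simps)
  finally show ?thesis by simp
qed

lemma qo_eq: "t \<noteq> 1 \<Longrightarrow> qo j x t = (1 - x) * Sg j x t"
  unfolding qo_def using Sg_id[of t x j] by (simp add: field_simps)

lemma fo_eq: "t \<noteq> 1 \<Longrightarrow> t \<noteq> 0 \<Longrightarrow> fo n x t = ((1 - x) * Sg n x t + x ^ n) / t"
proof -
  assume t: "t \<noteq> 1" "t \<noteq> 0"
  have "(1 - t + t * x) ^ n - t * x ^ n = (1 - t) * ((1 - x) * Sg n x t + x ^ n)"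
    using Sg_id[of t x n] by (simp add: algebra_simps)
  then have "fo n x t = ((1 - t) * ((1 - x) * Sg n x t + x ^ n)) / (t * (1 - t))"
    unfolding fo_def by simp
  with t show ?thesis by simp
qed

lemma Sg_1: "Sg j x 1 = real j * x ^ (j - 1)"
proof -
  have "Sg j x 1 = (\<Sum>i<j. x ^ (j - 1))"
    unfolding Sg_def by (intro sum.cong refl) (simp add: power_add[symmetric])
  then show ?thesis by simp
qed

lemma Sg_cont: "continuous_on S (\<lambda>p. Sg j (fst p) (snd p))"
  unfolding Sg_def by (intro continuous_intros)

lemma Sg_cont_t: "continuous_on S (\<lambda>t. Sg j x t)"
  unfolding Sg_def by (intro continuous_intros)

lemma Sg_bounds: "0 \<le> x \<Longrightarrow> x \<le> 1 \<Longrightarrow> 0 \<le> t \<Longrightarrow> t \<le> 1 \<Longrightarrow> 0 \<le> Sg j x t \<and> Sg j x t \<le> j"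
proof -
  assume a: "0 \<le> x" "x \<le> 1" "0 \<le> t" "t \<le> 1"
  have A: "0 \<le> 1 - t + t * x" "1 - t + t * x \<le> 1"
  proof -
    have "0 \<le> t * x" "t * x \<le> t" using a mult_left_le[of x t] by auto
    then show "0 \<le> 1 - t + t * x" "1 - t + t * x \<le> 1" using a by linarith+
  qed
  have "Sg j x t \<le> (\<Sum>i<j. 1)" unfolding Sg_def
    using a A by (intro sum_mono mult_le_one power_le_one) auto
  moreover have "0 \<le> Sg j x t" unfolding Sg_def using a A by (intro sum_nonneg) auto
  ultimately show ?thesis by simp
qed

lemma integral_le_spike1:
  fixes f g :: "real \<Rightarrow> real"
  assumes "f integrable_on {s..1}" "g integrable_on {s..1}"
    and "\<And>t. s \<le> t \<Longrightarrow> t < 1 \<Longrightarrow> f t \<le> g t"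
  shows "integral {s..1} f \<le> integral {s..1} g"
proof -
  define f' where "f' t = (if t = 1 then g t else f t)" for t
  have "integral {s..1} f' = integral {s..1} f"
    by (rule integral_spike[of "{1}"]) (auto simp: f'_def)
  moreover have "f' integrable_on {s..1}"
    by (rule integrable_spike_finite[of "{1}" _ _ f]) (auto simp: f'_def assms)
  moreover have "integral {s..1} f' \<le> integral {s..1} g"
    by (rule integral_le) (use assms \<open>f' integrable_on {s..1}\<close> in \<open>auto simp: f'_def\<close>)
  ultimately show ?thesis by simp
qed

lemma qo_int:
  assumes "s \<le> 1"
  shows "(qo j x has_integral integral {s..1} (\<lambda>t. (1 - x) * Sg j x t)) {s..1}"
proof -
  have "(\<lambda>t. (1 - x) * Sg j x t) integrable_on {s..1}"
    by (intro integrable_continuous_interval continuous_intros Sg_cont_t)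
  then have "((\<lambda>t. (1 - x) * Sg j x t) has_integral integral {s..1} (\<lambda>t. (1 - x) * Sg j x t)) {s..1}"
    by (rule integrable_integral)
  note h = this
  show ?thesis
    by (rule has_integral_spike_finite[of "{1}", OF _ _ h]) (auto simp: qo_eq)
qed

lemma fo_cont: "0 < s \<Longrightarrow> continuous_on {s..1} (\<lambda>t. ((1 - x) * Sg n x t + x ^ n) / t)"
  by (intro continuous_intros Sg_cont_t) auto

lemma fo_int:
  assumes "0 < s" "s \<le> 1"
  shows "(fo n x has_integral integral {s..1} (\<lambda>t. ((1 - x) * Sg n x t + x ^ n) / t)) {s..1}"
proof -
  have "(\<lambda>t. ((1 - x) * Sg n x t + x ^ n) / t) integrable_on {s..1}"
    using fo_cont[OF assms(1)] by (rule integrable_continuous_interval)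
  then have "((\<lambda>t. ((1 - x) * Sg n x t + x ^ n) / t) has_integral integral {s..1} (\<lambda>t. ((1 - x) * Sg n x t + x ^ n) / t)) {s..1}"
    by (rule integrable_integral)
  note h = this
  show ?thesis
    by (rule has_integral_spike_finite[of "{1}", OF _ _ h]) (use assms in \<open>auto simp: fo_eq\<close>)
qed

lemma fo_integrable: "0 < s \<Longrightarrow> s \<le> 1 \<Longrightarrow> fo n x integrable_on {s..1}"
  using fo_int by blast

lemma qo_integrable: "s \<le> 1 \<Longrightarrow> qo n x integrable_on {s..1}"
  using qo_int by blast

lemma fo_nonneg:
  assumes "0 \<le> x" "x \<le> 1" "0 \<le> t" "t \<le> 1"
  shows "0 \<le> fo n x t"
proof -
  have "0 \<le> (1 - t) * (1 - x)" using assms by simp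
  then have A: "x \<le> 1 - t + t * x" by (simp add: algebra_simps)
  have "t * x ^ n \<le> x ^ n" using assms by (simp add: mult_left_le_one_le)
  also have "x ^ n \<le> (1 - t + t * x) ^ n" using A assms by (intro power_mono) auto
  finally show ?thesis unfolding fo_def using assms by (intro divide_nonneg_nonneg) auto
qed

lemma step_identity:
  assumes "0 < s" "s \<le> 1"
  shows "gg n s x - gg (Suc n) s x = (1 - x) * FF n s x"
proof -
  have pt: "fo n x t - fo (Suc n) x t = (1 - x) * qo n x t" if "t \<noteq> 0" "t \<noteq> 1" for t
  proof -
    let ?a = "1 - t + t * x"
    have "(?a ^ n - t * x ^ n) - (?a ^ Suc n - t * x ^ Suc n) = t * (1 - x) * (?a ^ n - x ^ n)"
      by (simp add: algebra_simps)
    then have "fo n x t - fo (Suc n) x t = (t * (1 - x) * (?a ^ n - x ^ n)) / (t * (1 - t))"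
      unfolding fo_def by (simp add: diff_divide_distrib[symmetric])
    also have "\<dots> = (1 - x) * qo n x t" unfolding qo_def using that by (simp add: field_simps)
    finally show ?thesis .
  qed
  have "integral {s..1} (fo n x) - integral {s..1} (fo (Suc n) x)
      = integral {s..1} (\<lambda>t. fo n x t - fo (Suc n) x t)"
    by (rule integral_diff[symmetric]) (use fo_integrable assms in auto)
  also have "\<dots> = integral {s..1} (\<lambda>t. (1 - x) * qo n x t)"
    by (rule integral_spike[of "{1}"]) (use pt assms in auto)
  also have "\<dots> = (1 - x) * integral {s..1} (qo n x)" by simp
  finally show ?thesis unfolding gg_def FF_def by (simp add: algebra_simps)
qed

lemma FF_one: "FF j s 1 = - 1"
  unfolding FF_def qo_def by simp

lemma FF_zero:
  assumes "1 \<le> j" "s \<le> 1"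
  shows "FF j s 0 = (1 - s) ^ j / j"
proof -
  have q: "qo j 0 t = (1 - t) ^ (j - 1)" if "t \<noteq> 1" for t
  proof -
    have "(1 - t) ^ j = (1 - t) * (1 - t) ^ (j - 1)"
      using assms by (metis Suc_diff_le diff_Suc_1 power_Suc)
    moreover have "qo j 0 t = (1 - t) ^ j / (1 - t)" unfolding qo_def using assms by (simp add: zero_power)
    ultimately show ?thesis using that by simp
  qed
  have d: "((\<lambda>t. (1 - t) ^ j * (-1 / real j)) has_vector_derivative (1 - t) ^ (j - 1)) (at t within {s..1})" for t
  proof -
    have "((\<lambda>t. (1 - t) ^ j * (-1 / real j)) has_real_derivative (1 - t) ^ (j - 1)) (at t within {s..1})"
      using assms by (auto intro!: derivative_eq_intros)
    then show ?thesis by (simp add: has_real_derivative_iff_has_vector_derivative)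
  qed
  have "((\<lambda>t. (1 - t) ^ (j - 1)) has_integral ((1 - 1) ^ j * (-1 / real j) - (1 - s) ^ j * (-1 / real j))) {s..1}"
    by (rule fundamental_theorem_of_calculus) (use assms d in auto)
  then have "((\<lambda>t. (1 - t) ^ (j - 1)) has_integral (1 - s) ^ j / j) {s..1}"
    using assms by (simp add: zero_power)
  note h = this
  have "(qo j 0 has_integral (1 - s) ^ j / j) {s..1}"
    by (rule has_integral_spike_finite[of "{1}", OF _ _ h]) (use q in auto)
  then show ?thesis unfolding FF_def using assms by (simp add: integral_unique)
qed

lemma FF_alt: "s \<le> 1 \<Longrightarrow> FF j s x = integral {s..1} (\<lambda>t. (1 - x) * Sg j x t) - x ^ j"
  unfolding FF_def using qo_int[of s j x] by (simp add: integral_unique)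

lemma FF_cont:
  assumes "s \<le> 1"
  shows "continuous_on S (FF j s)"
proof -
  have c: "continuous_on (UNIV \<times> cbox s 1) (\<lambda>(x, t). (1 - x) * Sg j x t)"
    unfolding Sg_def case_prod_beta by (intro continuous_intros)
  have "continuous_on UNIV (\<lambda>x. integral (cbox s 1) (\<lambda>t. (1 - x) * Sg j x t))"
    using integral_continuous_on_param[OF c] by simp
  then have "continuous_on UNIV (\<lambda>x. integral {s..1} (\<lambda>t. (1 - x) * Sg j x t) - x ^ j)"
    by (intro continuous_intros) auto
  then have "continuous_on UNIV (FF j s)"
    using FF_alt[OF assms] by (simp add: fun_eq_iff)
  then show ?thesis using continuous_on_subset by blast
qed

lemma pow_diff_ge:
  fixes u v :: real
  assumes "1 \<le> v" "v \<le> u" "1 \<le> j"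
  shows "u - v \<le> u ^ j - v ^ j"
proof -
  obtain k where j: "j = Suc k" using assms by (cases j) auto
  have "u ^ Suc k - v ^ Suc k = (u - v) * u ^ k + v * (u ^ k - v ^ k)"
    by (simp add: algebra_simps)
  moreover have "1 \<le> u ^ k" using assms by (intro one_le_power) auto
  moreover have "v ^ k \<le> u ^ k" using assms by (intro power_mono) auto
  moreover have "u - v \<le> (u - v) * u ^ k"
    using assms \<open>1 \<le> u ^ k\<close> mult_left_mono[of 1 "u ^ k" "u - v"] by auto
  moreover have "0 \<le> v * (u ^ k - v ^ k)" using assms \<open>v ^ k \<le> u ^ k\<close> by simp
  ultimately show ?thesis unfolding j by linarith
qed

lemma qo_cmp:
  assumes "1 \<le> j" "0 < x" "x \<le> y" "y \<le> 1" "t < 1"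
  shows "qo j y t / y ^ j + (1 / x - 1 / y) \<le> qo j x t / x ^ j"
proof -
  define u where "u = (1 - t + t * x) / x"
  define v where "v = (1 - t + t * y) / y"
  have y0: "0 < y" using assms by simp
  have t1: "0 < 1 - t" using assms by simp
  have eu: "qo j x t / x ^ j = (u ^ j - 1) / (1 - t)"
    unfolding qo_def u_def power_divide using assms by (simp add: field_simps)
  have ev: "qo j y t / y ^ j = (v ^ j - 1) / (1 - t)"
    unfolding qo_def v_def power_divide using assms y0 by (simp add: field_simps)
  have u': "u = (1 - t) / x + t" unfolding u_def using assms by (simp add: field_simps)
  have v': "v = (1 - t) / y + t" unfolding v_def using y0 by (simp add: field_simps)
  have "(1 - t) / y \<le> (1 - t) / x" using assms t1 by (intro divide_left_mono) auto
  then have vu: "v \<le> u" using u' v' by simp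
  have "(1 - t) / y \<ge> 1 - t" using t1 y0 assms by (simp add: le_divide_eq)
  then have v1: "1 \<le> v" using v' by simp
  have "u - v = (1 - t) * (1 / x - 1 / y)" using u' v' by (simp add: algebra_simps)
  have "u - v \<le> u ^ j - v ^ j" using pow_diff_ge[OF v1 vu assms(1)] .
  then have "(u - v) / (1 - t) \<le> (u ^ j - v ^ j) / (1 - t)"
    using t1 by (simp add: divide_right_mono)
  moreover have "(u - v) / (1 - t) = 1 / x - 1 / y"
    using \<open>u - v = _\<close> t1 by simp
  moreover have "(u ^ j - v ^ j) / (1 - t) = (u ^ j - 1) / (1 - t) - (v ^ j - 1) / (1 - t)"
    by (simp add: diff_divide_distrib)
  ultimately show ?thesis using eu ev by linarith
qed

lemma FF_cmp:
  assumes "1 \<le> j" "s \<le> 1" "0 < x" "x \<le> y" "y \<le> 1"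
  shows "FF j s y / y ^ j + (1 - s) * (1 / x - 1 / y) \<le> FF j s x / x ^ j"
proof -
  have y0: "0 < y" using assms by simp
  have ex: "FF j s x / x ^ j = integral {s..1} (\<lambda>t. qo j x t / x ^ j) - 1"
    unfolding FF_def using assms by (simp add: diff_divide_distrib)
  have ey: "FF j s y / y ^ j = integral {s..1} (\<lambda>t. qo j y t / y ^ j) - 1"
    unfolding FF_def using y0 by (simp add: diff_divide_distrib)
  have iy: "(\<lambda>t. qo j y t / y ^ j) integrable_on {s..1}"
    using qo_integrable[OF assms(2)] by (rule integrable_on_divide)
  have ix: "(\<lambda>t. qo j x t / x ^ j) integrable_on {s..1}"
    using qo_integrable[OF assms(2)] by (rule integrable_on_divide)
  have ic: "(\<lambda>t. (1 / x - 1 / y)) integrable_on {s..1}"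
    by (rule integrable_continuous_interval) (intro continuous_intros)
  have "integral {s..1} (\<lambda>t. qo j y t / y ^ j + (1 / x - 1 / y))
        \<le> integral {s..1} (\<lambda>t. qo j x t / x ^ j)"
    by (rule integral_le_spike1) (use iy ic ix qo_cmp assms in \<open>auto intro: integrable_add\<close>)
  moreover have "integral {s..1} (\<lambda>t. qo j y t / y ^ j + (1 / x - 1 / y))
      = integral {s..1} (\<lambda>t. qo j y t / y ^ j) + (1 - s) * (1 / x - 1 / y)"
    using integral_add[OF iy ic] assms by simp
  ultimately show ?thesis using ex ey by linarith
qed

lemma FF_root:
  assumes "1 \<le> j" "s < 1"
  shows "\<exists>!x. x \<in> {0<..<1} \<and> FF j s x = 0"
proof -
  have s1: "s \<le> 1" using assms by simp
  have f0: "0 < FF j s 0" using FF_zero[OF assms(1) s1] assms by simp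
  obtain x where x: "0 \<le> x" "x \<le> 1" "FF j s x = 0"
    using IVT2'[of "FF j s" 1 0 0] FF_one[of j s] f0 FF_cont[OF s1] by force
  have "x \<noteq> 0" using x f0 by auto
  moreover have "x \<noteq> 1" using x FF_one[of j s] by auto
  ultimately have ex: "x \<in> {0<..<1} \<and> FF j s x = 0" using x by auto
  have uq: "y = x" if y: "y \<in> {0<..<1} \<and> FF j s y = 0" for y
  proof (rule ccontr)
    assume "y \<noteq> x"
    then consider "x < y" | "y < x" by linarith
    then show False
    proof cases
      case 1
      have "FF j s y / y ^ j + (1 - s) * (1 / x - 1 / y) \<le> FF j s x / x ^ j"
        using FF_cmp[OF assms(1) s1, of x y] ex y 1 by auto
      moreover have "0 < (1 - s) * (1 / x - 1 / y)"
        using assms 1 ex by (intro mult_pos_pos) (auto simp: field_simps)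
      ultimately show False using ex y by simp
    next
      case 2
      have "FF j s x / x ^ j + (1 - s) * (1 / y - 1 / x) \<le> FF j s y / y ^ j"
        using FF_cmp[OF assms(1) s1, of y x] ex y 2 by auto
      moreover have "0 < (1 - s) * (1 / y - 1 / x)"
        using assms 2 y by (intro mult_pos_pos) (auto simp: field_simps)
      ultimately show False using ex y by simp
    qed
  qed
  show ?thesis using ex uq by blast
qed

lemma theta_star_prop:
  assumes "2 \<le> n" "s < 1"
  shows "theta_star n s \<in> {0<..<1} \<and> FF (n - 1) s (theta_star n s) = 0"
proof -
  have eq: "(integral {s..1} (\<lambda>t. ((1 - t + t * x) ^ (n - 1) - x ^ (n - 1)) / (1 - t)) = x ^ (n - 1))
      \<longleftrightarrow> FF (n - 1) s x = 0" for x
    unfolding FF_def qo_def by auto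
  have "\<exists>!x. x \<in> {0<..<1} \<and> FF (n - 1) s x = 0" using FF_root[of "n - 1" s] assms by auto
  then have "(THE x. x \<in> {0<..<1} \<and> FF (n - 1) s x = 0) \<in> {0<..<1} \<and>
      FF (n - 1) s (THE x. x \<in> {0<..<1} \<and> FF (n - 1) s x = 0) = 0"
    by (rule theI')
  then show ?thesis unfolding theta_star_def eq using assms by simp
qed

lemma FF_sign:
  assumes "2 \<le> n" "s < 1" "0 \<le> x" "x \<le> 1"
  shows "x \<le> theta_star n s \<Longrightarrow> 0 \<le> FF (n - 1) s x"
    and "theta_star n s \<le> x \<Longrightarrow> FF (n - 1) s x \<le> 0"
proof -
  define th where "th = theta_star n s"
  have th: "0 < th" "th < 1" "FF (n - 1) s th = 0" using theta_star_prop[OF assms(1,2)] th_def by auto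
  have j: "1 \<le> n - 1" using assms by simp
  have s1: "s \<le> 1" using assms by simp
  show "0 \<le> FF (n - 1) s x" if "x \<le> theta_star n s"
  proof (cases "x = 0")
    case True
    have "0 \<le> (1 - s) ^ (n - 1) / real (n - 1)" using s1 by (intro divide_nonneg_nonneg zero_le_power) auto
    then show ?thesis using FF_zero[OF j s1] True by simp
  next
    case False
    then have x0: "0 < x" using assms by simp
    have "FF (n - 1) s th / th ^ (n - 1) + (1 - s) * (1 / x - 1 / th) \<le> FF (n - 1) s x / x ^ (n - 1)"
      using FF_cmp[OF j s1 x0, of th] that th th_def by auto
    moreover have "0 \<le> (1 - s) * (1 / x - 1 / th)"
      using assms that x0 th th_def by (intro mult_nonneg_nonneg) (auto simp: field_simps)
    ultimately have "0 \<le> FF (n - 1) s x / x ^ (n - 1)" using th by simp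
    moreover have "0 < x ^ (n - 1)" using x0 by simp
    ultimately show ?thesis by (simp add: zero_le_divide_iff)
  qed
  show "FF (n - 1) s x \<le> 0" if "theta_star n s \<le> x"
  proof -
    have x0: "0 < x" using that th th_def by simp
    have "FF (n - 1) s x / x ^ (n - 1) + (1 - s) * (1 / th - 1 / x) \<le> FF (n - 1) s th / th ^ (n - 1)"
      using FF_cmp[OF j s1 th(1), of x] that th th_def assms by auto
    moreover have "0 \<le> (1 - s) * (1 / th - 1 / x)"
      using assms that x0 th th_def by (intro mult_nonneg_nonneg) (auto simp: field_simps)
    ultimately have "FF (n - 1) s x / x ^ (n - 1) \<le> 0" using th by simp
    moreover have "0 < x ^ (n - 1)" using x0 by simp
    ultimately show ?thesis by (simp add: divide_le_0_iff)
  qed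
qed

lemma aux2: "(t::real) \<noteq> 0 \<Longrightarrow> 1 - t \<noteq> 0 \<Longrightarrow>
  ((c * ((0 + (0 * x + 1 * t)) * A) - (0 * X + c * (1 * B) * t)) * (t * (1 - t)) - Y * 0) /
        (t * (1 - t) * (t * (1 - t))) = c * (A - B) / (1 - t)"
proof -
  assume t: "t \<noteq> 0" "1 - t \<noteq> 0"
  have "((c * ((0 + (0 * x + 1 * t)) * A) - (0 * X + c * (1 * B) * t)) * (t * (1 - t)) - Y * 0)
     = (t * (1 - t)) * (t * (c * (A - B)))" by (simp add: algebra_simps)
  then show ?thesis using t by simp
qed
lemma fo_deriv: "0 < t \<Longrightarrow> t \<noteq> 1 \<Longrightarrow> ((\<lambda>x. ((1 - t + t * x) ^ n - t * x ^ n) / (t * (1 - t))) has_field_derivative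
   (real n * ((1 - t + t * x) ^ (n - 1) - x ^ (n - 1)) / (1 - t))) (at x within UNIV)"
  apply (rule derivative_eq_intros refl)+
   prefer 2
   apply (rule trans[OF aux2])
     apply simp_all
  done

lemma gg_deriv:
  assumes "2 \<le> n" "0 < s" "s \<le> 1"
  shows "(gg n s has_real_derivative (real n * FF (n - 1) s x0)) (at x0)"
proof -
  define f where "f x t = (if t = 1 then real n * x ^ (n - 1) - real (n - 1) * x ^ n else fo n x t)" for x t
  define fx where "fx x t = real n * ((1 - x) * Sg (n - 1) x t)" for x t
  obtain p where p: "n = Suc (Suc p)" using assms by (metis add_2_eq_Suc le_Suc_ex)
  have der: "((\<lambda>x. f x t) has_field_derivative fx x t) (at x within UNIV)"
    if "t \<in> cbox s 1" for x t
  proof (cases "t = 1")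
    case True
    have e: "(\<lambda>x. f x t) = (\<lambda>x. real n * x ^ (n - 1) - real (n - 1) * x ^ n)"
      using True by (simp add: f_def fun_eq_iff)
    have "fx x t = real n * ((1 - x) * (real (n - 1) * x ^ (n - 2)))"
      unfolding fx_def True Sg_1 by (simp add: p)
    also have "\<dots> = real n * (real (n - 1) * x ^ (n - 1 - 1)) - real (n - 1) * (real n * x ^ (n - 1))"
      by (simp add: p algebra_simps)
    finally have fx: "fx x t = \<dots>" .
    show ?thesis unfolding e fx by (auto intro!: derivative_eq_intros)
  next
    case False
    have t0: "0 < t" "t \<noteq> 1" using that False assms by auto
    have e: "(\<lambda>x. f x t) = (\<lambda>x. ((1 - t + t * x) ^ n - t * x ^ n) / (t * (1 - t)))"
      using False by (simp add: f_def fo_def fun_eq_iff)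
    have "fx x t = real n * qo (n - 1) x t" unfolding fx_def using qo_eq[OF t0(2)] by simp
    also have "\<dots> = real n * ((1 - t + t * x) ^ (n - 1) - x ^ (n - 1)) / (1 - t)"
      unfolding qo_def by simp
    finally have fx: "fx x t = \<dots>" .
    show ?thesis unfolding e fx using fo_deriv[OF t0] .
  qed
  have intf: "f x integrable_on cbox s 1" for x
    by (rule integrable_spike_finite[of "{1}" _ _ "fo n x"]) (use fo_integrable assms in \<open>auto simp: f_def\<close>)
  have cont: "continuous_on (UNIV \<times> cbox s 1) (\<lambda>(x, t). fx x t)"
    unfolding fx_def Sg_def case_prod_beta by (intro continuous_intros)
  have L: "((\<lambda>x. integral (cbox s 1) (f x)) has_field_derivative integral (cbox s 1) (fx x0)) (at x0 within UNIV)"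
    by (rule leibniz_rule_field_derivative[OF der intf cont]) auto
  have ie: "integral (cbox s 1) (f x) = integral {s..1} (fo n x)" for x
    unfolding cbox_interval by (rule integral_spike[of "{1}"]) (auto simp: f_def)
  have g: "gg n s = (\<lambda>x. integral (cbox s 1) (f x) - x ^ n)"
    unfolding gg_def ie by simp
  have "integral (cbox s 1) (fx x0) = real n * integral {s..1} (\<lambda>t. (1 - x0) * Sg (n - 1) x0 t)"
    unfolding fx_def by simp
  also have "\<dots> = real n * (FF (n - 1) s x0 + x0 ^ (n - 1))" using FF_alt[OF assms(3)] by simp
  finally have ifx: "integral (cbox s 1) (fx x0) = \<dots>" .
  have "(gg n s has_real_derivative (integral (cbox s 1) (fx x0) - real n * x0 ^ (n - 1))) (at x0)"
    unfolding g using L by (auto intro!: derivative_eq_intros)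
  then show ?thesis unfolding ifx by (simp add: algebra_simps)
qed

lemma gg_max:
  assumes "2 \<le> n" "0 < s" "s < 1" "0 \<le> y" "y \<le> 1"
  shows "gg n s y \<le> gg n s (theta_star n s)"
proof -
  define th where "th = theta_star n s"
  have th: "0 < th" "th < 1" using theta_star_prop[OF assms(1,3)] th_def by auto
  have s1: "s \<le> 1" using assms by simp
  show ?thesis
  proof (cases "y \<le> th")
    case True
    have "gg n s y \<le> gg n s th"
    proof (rule DERIV_nonneg_imp_nondecreasing[OF True])
      fix x assume x: "y \<le> x" "x \<le> th"
      have "0 \<le> FF (n - 1) s x" using FF_sign(1)[OF assms(1,3), of x] x th assms th_def by auto
      then have h: "0 \<le> real n * FF (n - 1) s x" by simp
      show "\<exists>D. (gg n s has_real_derivative D) (at x) \<and> 0 \<le> D"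
        by (rule exI[of _ "real n * FF (n - 1) s x"], rule conjI[OF gg_deriv[OF assms(1,2) s1] h])
    qed
    then show ?thesis using th_def by simp
  next
    case False
    then have F: "th \<le> y" by simp
    have "gg n s y \<le> gg n s th"
    proof (rule DERIV_nonpos_imp_nonincreasing[OF F])
      fix x assume x: "th \<le> x" "x \<le> y"
      have "FF (n - 1) s x \<le> 0" using FF_sign(2)[OF assms(1,3), of x] x th assms th_def by auto
      then have h: "real n * FF (n - 1) s x \<le> 0" by (simp add: mult_nonneg_nonpos)
      show "\<exists>D. (gg n s has_real_derivative D) (at x) \<and> D \<le> 0"
        by (rule exI[of _ "real n * FF (n - 1) s x"], rule conjI[OF gg_deriv[OF assms(1,2) s1] h])
    qed
    then show ?thesis using th_def by simp
  qed
qed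

lemma gg_anti_s:
  assumes "0 < s" "s \<le> s'" "s' \<le> 1" "0 \<le> x" "x \<le> 1"
  shows "gg n s' x \<le> gg n s x"
proof -
  have i: "fo n x integrable_on {s..1}" using fo_integrable assms by auto
  have c: "integral {s..s'} (fo n x) + integral {s'..1} (fo n x) = integral {s..1} (fo n x)"
    using Henstock_Kurzweil_Integration.integral_combine[OF assms(2,3) i] .
  have "0 \<le> integral {s..s'} (fo n x)"
    by (rule integral_nonneg) (use integrable_subinterval_real[OF i, of s s'] assms fo_nonneg in auto)
  then show ?thesis unfolding gg_def using c by linarith
qed

lemma gg_lower:
  assumes "0 < s" "s \<le> 1" "0 \<le> x" "x \<le> 1"
  shows "- 1 \<le> gg n s x"
proof -
  have "0 \<le> integral {s..1} (fo n x)"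
    by (rule integral_nonneg) (use fo_integrable assms fo_nonneg in auto)
  moreover have "x ^ n \<le> 1" using assms by (simp add: power_le_one)
  ultimately show ?thesis unfolding gg_def by linarith
qed

lemma ln_int: "0 < (s::real) \<Longrightarrow> s \<le> 1 \<Longrightarrow> ((\<lambda>t. 1 / t) has_integral (- ln s)) {s..1}"
proof -
  assume s: "0 < s" "s \<le> 1"
  have d: "(ln has_vector_derivative 1 / t) (at t within {s..1})" if t: "t \<in> {s..1}" for t :: real
  proof -
    have "0 < t" using s t by simp
    then have "(ln has_real_derivative 1 / t) (at t within {s..1})"
      by (auto intro!: derivative_eq_intros)
    then show ?thesis by (simp add: has_real_derivative_iff_has_vector_derivative)
  qed
  have "((\<lambda>t. 1 / t) has_integral (ln 1 - ln s)) {s..1}"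
    by (rule fundamental_theorem_of_calculus[OF s(2) d])
  then show ?thesis by simp
qed

lemma gg_upper:
  assumes "0 < s" "s \<le> 1" "0 \<le> x" "x \<le> 1"
  shows "gg n s x \<le> real (Suc n) * (- ln s)"
proof -
  have e: "integral {s..1} (fo n x) = integral {s..1} (\<lambda>t. ((1 - x) * Sg n x t + x ^ n) / t)"
    using fo_int[OF assms(1,2)] by (simp add: integral_unique)
  have i1: "(\<lambda>t. ((1 - x) * Sg n x t + x ^ n) / t) integrable_on {s..1}"
    using fo_cont[OF assms(1)] by (rule integrable_continuous_interval)
  have i2: "(\<lambda>t. real (Suc n) * (1 / t)) integrable_on {s..1}"
    using ln_int[OF assms(1,2)] by (intro integrable_on_mult_right) blast
  have "integral {s..1} (\<lambda>t. ((1 - x) * Sg n x t + x ^ n) / t) \<le> integral {s..1} (\<lambda>t. real (Suc n) * (1 / t))"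
  proof (rule integral_le[OF i1 i2])
    fix t assume t: "t \<in> {s..1}"
    then have t0: "0 < t" using assms by simp
    have sg: "Sg n x t \<le> n" "0 \<le> Sg n x t" using Sg_bounds[of x t n] assms t by auto
    have "(1 - x) * Sg n x t \<le> Sg n x t" using assms sg by (intro mult_left_le_one_le) auto
    then have "(1 - x) * Sg n x t \<le> real n" using sg by linarith
    moreover have "x ^ n \<le> 1" using assms by (simp add: power_le_one)
    ultimately have "(1 - x) * Sg n x t + x ^ n \<le> real (Suc n)" by simp
    then show "((1 - x) * Sg n x t + x ^ n) / t \<le> real (Suc n) * (1 / t)"
      using t0 by (simp add: divide_right_mono)
  qed
  also have "\<dots> = real (Suc n) * (- ln s)"
    using has_integral_mult_right[OF ln_int[OF assms(1,2)], of "real (Suc n)"] by (rule integral_unique)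
  finally have "integral {s..1} (fo n x) \<le> real (Suc n) * (- ln s)" using e by simp
  moreover have "0 \<le> x ^ n" using assms by simp
  ultimately show ?thesis unfolding gg_def by linarith
qed

lemma theta_range:
  assumes "2 \<le> k"
  shows "0 \<le> theta_star k s \<and> theta_star k s \<le> 1"
proof (cases "s < 1")
  case True
  then show ?thesis using theta_star_prop[OF assms True] by auto
next
  case False
  then show ?thesis unfolding theta_star_def by simp
qed

lemma G_anti:
  assumes "2 \<le> k" "0 < s" "s \<le> s'" "s' \<le> 1"
  shows "gg k s' (theta_star k s') \<le> gg k s (theta_star k s)"
proof (cases "s = 1")
  case True
  then have "s' = s" using assms by simp
  then show ?thesis by simp
next
  case False
  then have s1: "s < 1" using assms by simp
  have r: "0 \<le> theta_star k s'" "theta_star k s' \<le> 1" using theta_range[OF assms(1)] by auto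
  have "gg k s' (theta_star k s') \<le> gg k s (theta_star k s')"
    using gg_anti_s[OF assms(2,3,4) r] .
  also have "\<dots> \<le> gg k s (theta_star k s)"
    using gg_max[OF assms(1,2) s1 r] .
  finally show ?thesis .
qed

lemma anti_piece:
  fixes f h :: "real \<Rightarrow> real"
  assumes "c \<le> d" "\<And>x y. c \<le> x \<Longrightarrow> x \<le> y \<Longrightarrow> y \<le> d \<Longrightarrow> f y \<le> f x"
    and "\<And>s. c < s \<Longrightarrow> s < d \<Longrightarrow> h s = f s"
  shows "h integrable_on {c..d}"
proof -
  have "mono_on {c..d} (\<lambda>x. - f x)"
    by (rule mono_onI) (use assms(2) in auto)
  then have "(\<lambda>x. - f x) integrable_on {c..d}" by (rule integrable_on_mono_on)
  then have "f integrable_on {c..d}" using integrable_neg by fastforce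
  then show ?thesis
    by (rule integrable_spike_finite[of "{c, d}", rotated 2]) (use assms(3) in auto)
qed

definition hh :: "nat \<Rightarrow> real \<Rightarrow> real \<Rightarrow> real \<Rightarrow> real" where
  "hh k l1 l2 s = gg k s (trunc_thr (theta_star k) l1 l2 s)"

lemma trunc_range: "2 \<le> k \<Longrightarrow> 0 \<le> trunc_thr (theta_star k) l1 l2 s \<and> trunc_thr (theta_star k) l1 l2 s \<le> 1"
  unfolding trunc_thr_def using theta_range[of k s] by auto

lemma hh_bounds:
  assumes "2 \<le> k" "0 < s" "s \<le> 1"
  shows "- 1 \<le> hh k l1 l2 s" "hh k l1 l2 s \<le> real (Suc k) * (- ln s)"
  unfolding hh_def using trunc_range[OF assms(1), of l1 l2 s] gg_lower gg_upper assms by auto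

lemma hh_int_a:
  assumes "2 \<le> k" "0 \<le> l1" "l1 \<le> l2" "l2 \<le> 1" "0 < a" "a \<le> 1"
  shows "hh k l1 l2 integrable_on {a..1}"
proof -
  define c1 where "c1 = max a l1"
  define c2 where "c2 = max c1 l2"
  have c: "a \<le> c1" "c1 \<le> c2" "c2 \<le> 1" using assms by (auto simp: c1_def c2_def)
  have p1: "hh k l1 l2 integrable_on {a..c1}"
  proof (rule anti_piece[where f = "\<lambda>s. gg k s 1"])
    show "a \<le> c1" using c by simp
    show "gg k y 1 \<le> gg k x 1" if "a \<le> x" "x \<le> y" "y \<le> c1" for x y
      using gg_anti_s[of x y 1 k] that c assms by auto
    show "hh k l1 l2 s = gg k s 1" if "a < s" "s < c1" for s
    proof -
      have "s \<le> l1" using that by (auto simp: c1_def)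
      then show ?thesis unfolding hh_def trunc_thr_def by simp
    qed
  qed
  have p2: "hh k l1 l2 integrable_on {c1..c2}"
  proof (rule anti_piece[where f = "\<lambda>s. gg k s (theta_star k s)"])
    show "c1 \<le> c2" using c by simp
    show "gg k y (theta_star k y) \<le> gg k x (theta_star k x)" if "c1 \<le> x" "x \<le> y" "y \<le> c2" for x y
      using G_anti[OF assms(1), of x y] that c assms by auto
    show "hh k l1 l2 s = gg k s (theta_star k s)" if "c1 < s" "s < c2" for s
    proof -
      have "\<not> s \<le> l1" "s < l2" using that by (auto simp: c1_def c2_def)
      then show ?thesis unfolding hh_def trunc_thr_def by simp
    qed
  qed
  have p3: "hh k l1 l2 integrable_on {c2..1}"
  proof (rule anti_piece[where f = "\<lambda>s. gg k s 0"])
    show "c2 \<le> 1" using c by simp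
    show "gg k y 0 \<le> gg k x 0" if "c2 \<le> x" "x \<le> y" "y \<le> 1" for x y
      using gg_anti_s[of x y 0 k] that c assms by auto
    show "hh k l1 l2 s = gg k s 0" if "c2 < s" "s < 1" for s
    proof -
      have "\<not> s \<le> l1" "\<not> s < l2" using that by (auto simp: c1_def c2_def)
      then show ?thesis unfolding hh_def trunc_thr_def by simp
    qed
  qed
  have "hh k l1 l2 integrable_on {c1..1}"
    using Henstock_Kurzweil_Integration.integrable_combine[OF c(2,3) p2 p3] .
  then show ?thesis
    using Henstock_Kurzweil_Integration.integrable_combine[OF c(1) _ p1] c by auto
qed

lemma neg_ln_int:
  fixes a :: real
  assumes "0 < a" "a \<le> 1"
  shows "integral {a..1} (\<lambda>s. - ln s) \<le> 1"
proof -
  have d: "((\<lambda>s. s - s * ln s) has_vector_derivative - ln t) (at t within {a..1})" if t: "t \<in> {a..1}" for t :: real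
  proof -
    have t0: "0 < t" using assms t by simp
    have "((\<lambda>s. s - s * ln s) has_real_derivative (- ln t)) (at t within {a..1})"
      using t0 by (auto intro!: derivative_eq_intros)
    then show ?thesis by (simp add: has_real_derivative_iff_has_vector_derivative)
  qed
  have "((\<lambda>s. - ln s) has_integral ((1 - 1 * ln 1) - (a - a * ln a))) {a..1}"
    by (rule fundamental_theorem_of_calculus[OF assms(2) d])
  then have "integral {a..1} (\<lambda>s. - ln s) = (1 - 1 * ln 1) - (a - a * ln a)" by (rule integral_unique)
  then have "integral {a..1} (\<lambda>s. - ln s) = 1 - a + a * ln a" by simp
  moreover have "a * ln a \<le> 0" using assms by (simp add: mult_nonneg_nonpos)
  ultimately show ?thesis using assms by linarith
qed

lemma q_int:
  assumes "2 \<le> k" "0 \<le> l1" "l1 \<le> l2" "l2 \<le> 1"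
  shows "(\<lambda>s. if s = 0 then 0 else hh k l1 l2 s + 1) integrable_on {0..1}"
proof -
  define h where "h = hh k l1 l2"
  define fs where "fs j s = (if inverse (real (Suc j)) \<le> s then h s + 1 else 0)" for j s
  define aa where "aa j = inverse (real (Suc j))" for j
  have a: "0 < aa j" "aa j \<le> 1" for j unfolding aa_def by (auto simp: inverse_le_1_iff)
  have hpos: "0 \<le> h s + 1" if "0 < s" "s \<le> 1" for s
    using hh_bounds(1)[OF assms(1) that, of l1 l2] h_def by simp
  have hint: "(\<lambda>s. h s + 1) integrable_on {aa j..1}" for j
    using hh_int_a[OF assms a(1) a(2), of j] h_def by (intro integrable_add) auto
  have up: "fs j integrable_on {aa j..1}" for j
    by (rule integrable_eq[OF hint]) (auto simp: fs_def aa_def)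
  have lo: "fs j integrable_on {0..aa j}" for j
    by (rule integrable_spike_finite[of "{aa j}" _ _ "\<lambda>s. 0"]) (auto simp: fs_def aa_def)
  have fint: "fs j integrable_on {0..1}" for j
    using Henstock_Kurzweil_Integration.integrable_combine[OF _ _ lo up] a[of j] by auto
  have fval: "integral {0..1} (fs j) = integral {aa j..1} (\<lambda>s. h s + 1)" for j
  proof -
    have "integral {0..aa j} (fs j) + integral {aa j..1} (fs j) = integral {0..1} (fs j)"
      using Henstock_Kurzweil_Integration.integral_combine[OF _ _ fint[of j]] a[of j] by auto
    moreover have "integral {0..aa j} (fs j) = integral {0..aa j} (\<lambda>s. 0)"
      by (rule integral_spike[of "{aa j}"]) (auto simp: fs_def aa_def)
    moreover have "integral {aa j..1} (fs j) = integral {aa j..1} (\<lambda>s. h s + 1)"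
      by (rule integral_cong) (auto simp: fs_def aa_def)
    ultimately show ?thesis by simp
  qed
  have bnd: "\<bar>integral {0..1} (fs j)\<bar> \<le> real (Suc k) + 1" for j
  proof -
    have i0: "0 \<le> integral {aa j..1} (\<lambda>s. h s + 1)"
      by (rule integral_nonneg[OF hint]) (use a[of j] hpos in auto)
    have ig: "(\<lambda>s. real (Suc k) * (- ln s) + 1) integrable_on {aa j..1}"
      by (rule integrable_continuous_interval) (use a[of j] in \<open>auto intro!: continuous_intros\<close>)
    have ig1: "(\<lambda>s. - ln s) integrable_on {aa j..1}"
      by (rule integrable_continuous_interval) (use a[of j] in \<open>auto intro!: continuous_intros\<close>)
    have "integral {aa j..1} (\<lambda>s. h s + 1) \<le> integral {aa j..1} (\<lambda>s. real (Suc k) * (- ln s) + 1)"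
      by (rule integral_le[OF hint ig]) (use hh_bounds(2)[OF assms(1)] a[of j] h_def in auto)
    also have "\<dots> = real (Suc k) * integral {aa j..1} (\<lambda>s. - ln s) + (1 - aa j)"
    proof -
      have "integral {aa j..1} (\<lambda>s. real (Suc k) * (- ln s) + 1)
          = integral {aa j..1} (\<lambda>s. real (Suc k) * (- ln s)) + integral {aa j..1} (\<lambda>s. 1)"
        by (rule integral_add[OF integrable_on_mult_right[OF ig1] integrable_const_ivl])
      then show ?thesis using a[of j] by simp
    qed
    also have "\<dots> \<le> real (Suc k) * 1 + 1"
      using neg_ln_int[OF a(1) a(2), of j] a[of j] by (intro add_mono mult_left_mono) auto
    finally show ?thesis using i0 fval[of j] by simp
  qed
  have mono: "fs j s \<le> fs (Suc j) s" if "s \<in> {0..1}" for j s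
  proof -
    have b: "inverse (real (Suc (Suc j))) \<le> inverse (real (Suc j))" "0 < inverse (real (Suc (Suc j)))"
      by (rule le_imp_inverse_le) auto
    show ?thesis
    proof (cases "inverse (real (Suc j)) \<le> s")
      case True
      then have "inverse (real (Suc (Suc j))) \<le> s" using b by linarith
      then show ?thesis unfolding fs_def using True by simp
    next
      case False
      show ?thesis
      proof (cases "inverse (real (Suc (Suc j))) \<le> s")
        case True
        then have "0 < s" using b(2) by linarith
        then have "0 \<le> h s + 1" using hpos[of s] that by auto
        then show ?thesis unfolding fs_def using True False by simp
      next
        case False2: False
        then show ?thesis unfolding fs_def using False by simp
      qed
    qed
  qed
  have lim: "(\<lambda>j. fs j s) \<longlonglongrightarrow> (if s = 0 then 0 else h s + 1)" if "s \<in> {0..1}" for s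
  proof (cases "s = 0")
    case True
    then have "fs j s = 0" for j unfolding fs_def by simp
    then show ?thesis using True by simp
  next
    case False
    then have s0: "0 < s" using that by simp
    obtain N where N: "N > 0" "inverse (real N) < s" using ex_inverse_of_nat_less[OF s0] by auto
    have "eventually (\<lambda>j. fs j s = h s + 1) sequentially"
    proof (rule eventually_sequentiallyI[of N])
      fix j assume "N \<le> j"
      then have "inverse (real (Suc j)) \<le> inverse (real N)"
        using N by (intro le_imp_inverse_le) auto
      then have "inverse (real (Suc j)) \<le> s" using N by linarith
      then show "fs j s = h s + 1" unfolding fs_def by simp
    qed
    then show ?thesis using False by (simp add: tendsto_eventually)
  qed
  have "(\<lambda>s. if s = 0 then 0 else h s + 1) integrable_on {0..1}"
  proof (rule monotone_convergence_increasing[OF fint mono lim, THEN conjunct1])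
    show "bounded (range (\<lambda>j. integral {0..1} (fs j)))"
      unfolding bounded_iff using bnd by auto
  qed
  then show ?thesis unfolding h_def .
qed

lemma fo_lam: "fo n x = (\<lambda>t. ((1 - t + t * x) ^ n - t * x ^ n) / (t * (1 - t)))"
  by (rule ext) (simp add: fo_def)

lemma Gamma_eq:
  "Gamma k (trunc_thr (theta_star k) l1 l2) = integral {0..1} (\<lambda>s. (if s = 0 then 0 else hh k l1 l2 s + 1) - 1)"
proof -
  have "Gamma k (trunc_thr (theta_star k) l1 l2) = integral {0..1} (hh k l1 l2)"
    unfolding Gamma_def hh_def gg_def fo_lam by simp
  also have "\<dots> = integral {0..1} (\<lambda>s. (if s = 0 then 0 else hh k l1 l2 s + 1) - 1)"
    by (rule integral_spike[of "{0}"]) auto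
  finally show ?thesis .
qed

lemma step_pt:
  assumes "2 \<le> k" "0 < s" "s \<le> 1" "l2 \<le> 1"
  shows "hh (Suc k) l1 l2 s \<le> hh k l1 l2 s"
proof (cases "s \<le> l1")
  case True
  then show ?thesis unfolding hh_def trunc_thr_def using step_identity[OF assms(2,3), of k 1] by simp
next
  case F1: False
  show ?thesis
  proof (cases "s < l2")
    case True
    have s1: "s < 1" using True assms by simp
    define x where "x = theta_star (Suc k) s"
    have x: "0 < x" "x < 1" "FF k s x = 0"
      using theta_star_prop[of "Suc k" s] assms s1 x_def by auto
    have "gg k s x - gg (Suc k) s x = 0" using step_identity[OF assms(2,3), of k x] x by simp
    moreover have "gg k s x \<le> gg k s (theta_star k s)"
      using gg_max[OF assms(1,2) s1, of x] x by simp
    ultimately show ?thesis unfolding hh_def trunc_thr_def using F1 True x_def by simp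
  next
    case False
    have "0 \<le> FF k s 0" using FF_zero[of k s] assms
      by (simp add: divide_nonneg_nonneg)
    then show ?thesis unfolding hh_def trunc_thr_def using F1 False step_identity[OF assms(2,3), of k 0]
      by simp
  qed
qed

lemma Gamma_step:
  assumes "2 \<le> k" "0 \<le> l1" "l1 \<le> l2" "l2 \<le> 1"
  shows "Gamma (Suc k) (trunc_thr (theta_star (Suc k)) l1 l2) \<le> Gamma k (trunc_thr (theta_star k) l1 l2)"
  unfolding Gamma_eq
proof (rule integral_le)
  show "(\<lambda>s. (if s = 0 then 0 else hh (Suc k) l1 l2 s + 1) - 1) integrable_on {0..1}"
    using q_int[of "Suc k" l1 l2] assms by (intro integrable_diff) auto
  show "(\<lambda>s. (if s = 0 then 0 else hh k l1 l2 s + 1) - 1) integrable_on {0..1}"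
    using q_int[of k l1 l2] assms by (intro integrable_diff) auto
  fix s :: real assume "s \<in> {0..1}"
  then show "(if s = 0 then 0 else hh (Suc k) l1 l2 s + 1) - 1 \<le> (if s = 0 then 0 else hh k l1 l2 s + 1) - 1"
    using step_pt[OF assms(1) _ _ assms(4), of s] by auto
qed

theorem mainTheorem15:
  fixes l1 l2 :: real and m n :: nat
  assumes "0 \<le> l1" "l1 \<le> l2" "l2 \<le> 1"
    and "2 \<le> m" "m \<le> n"
  shows "Gamma n (trunc_thr (theta_star n) l1 l2) \<le> Gamma m (trunc_thr (theta_star m) l1 l2)"
  using assms(5)
proof (induction n rule: dec_induct)
  case base
  then show ?case by simp
next
  case (step k)
  have "Gamma (Suc k) (trunc_thr (theta_star (Suc k)) l1 l2) \<le> Gamma k (trunc_thr (theta_star k) l1 l2)"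
    using Gamma_step[of k l1 l2] assms step by auto
  then show ?case using step by linarith
qed

end
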